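(* Let $E$ be an elliptic curve over $\mathbb{Q}$ in short Weierstrass form $y^2=x^3+Ax+B$ with $A,B\in\mathbb{Q}$. Suppose $E(\mathbb{R})$ has two connected components, and let $E^B(\mathbb{R})$ denote the bounded one. Then every rational point $Q\in E(\mathbb{Q})\cap E^B(\mathbb{R})$ satisfies $$\log|x(Q)|\le 4h(E).$$
   Context: For a rational number $a/b$ in lowest terms, $h(a/b)=\log\max\{|a|,|b|\}$. Let $\Delta=-16(4A^3+27B^2)$ be the discriminant of $E$ and $j=-1728(4A)^3/\Delta$ its $j$-invariant. The height of $E$ is $h(E)=\frac{1}{12}\max\{h(j),h(\Delta)\}$. *)

theory Defs
  imports "HOL-Analysis.Analysis"
begin

definition rat_height :: "rat \<Rightarrow> real" where
  "rat_height q = (case quotient_of q of (a, b) \<Rightarrow> ln (real_of_int (max \<bar>a\<bar> \<bar>b\<bar>)))"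

definition ec_disc :: "rat \<Rightarrow> rat \<Rightarrow> rat" where
  "ec_disc A B = -16 * (4 * A ^ 3 + 27 * B ^ 2)"

definition ec_j :: "rat \<Rightarrow> rat \<Rightarrow> rat" where
  "ec_j A B = -1728 * (4 * A) ^ 3 / ec_disc A B"

definition ec_height :: "rat \<Rightarrow> rat \<Rightarrow> real" where
  "ec_height A B = (1 / 12) * max (rat_height (ec_j A B)) (rat_height (ec_disc A B))"

definition ec_real_points :: "rat \<Rightarrow> rat \<Rightarrow> (real \<times> real) set" where
  "ec_real_points A B = {(x, y). y ^ 2 = x ^ 3 + of_rat A * x + of_rat B}"

end

theory Submission
  imports Defs
begin

lemma rat_height_facts:
  "rat_height q \<ge> 0 \<and> \<bar>real_of_rat q\<bar> \<le> exp (rat_height q)"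
proof -
  obtain a b where qa: "quotient_of q = (a, b)" by (cases "quotient_of q") auto
  have bpos: "b > 0" using quotient_of_denom_pos[OF qa] .
  have qd: "q = of_int a / of_int b" using quotient_of_div[OF qa] .
  define H where "H = real_of_int (max \<bar>a\<bar> \<bar>b\<bar>)"
  have H1: "H \<ge> 1" unfolding H_def using bpos by linarith
  have rh: "rat_height q = ln H" unfolding rat_height_def qa H_def by simp
  have "\<bar>real_of_rat q\<bar> = \<bar>real_of_int a\<bar> / real_of_int b"
    using bpos by (simp add: qd of_rat_divide abs_divide)
  also have "\<dots> \<le> \<bar>real_of_int a\<bar>"
    using bpos by (simp add: divide_le_eq) (smt (verit) of_int_less_1_iff mult_le_cancel_left1 abs_ge_zero)
  also have "\<dots> \<le> H" unfolding H_def by simp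
  finally show ?thesis using H1 rh by simp
qed

lemma cubic_mono:
  fixes a b x0 t :: real
  assumes "x0^2 \<ge> 4 * \<bar>a\<bar> / 3" "t \<ge> x0"
  shows "t^3 + a*t + b \<ge> x0^3 + a*x0 + b"
proof -
  have e: "t^3 + a*t + b - (x0^3 + a*x0 + b) = (t - x0) * ((t + x0/2)^2 + (3/4*x0^2 + a))"
    by (simp add: algebra_simps power2_eq_square power3_eq_cube)
  have "(t + x0/2)^2 \<ge> 0" by simp
  moreover have "3/4*x0^2 + a \<ge> 0" using assms(1) abs_ge_minus_self[of a] by linarith
  ultimately have "(t + x0/2)^2 + (3/4*x0^2 + a) \<ge> 0" by linarith
  then have "(t - x0) * ((t + x0/2)^2 + (3/4*x0^2 + a)) \<ge> 0" using assms(2) by simp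
  then show ?thesis using e by linarith
qed

theorem proposition2p2:
  fixes A B x y :: rat
  assumes elliptic: "ec_disc A B \<noteq> 0"
    and two_components: "card (components (ec_real_points A B)) = 2"
    and on_curve: "y ^ 2 = x ^ 3 + A * x + B"
    and bounded_comp:
      "bounded (connected_component_set (ec_real_points A B) (of_rat x, of_rat y))"
  shows "ln \<bar>of_rat x :: real\<bar> \<le> 4 * ec_height A B"
proof -
  define a where "a = real_of_rat A"
  define b where "b = real_of_rat B"
  define x0 where "x0 = real_of_rat x"
  define y0 where "y0 = real_of_rat y"
  define f where "f = (\<lambda>t::real. t^3 + a*t + b)"
  have oc: "y0^2 = f x0"
    unfolding y0_def f_def x0_def a_def b_def
    by (metis on_curve of_rat_add of_rat_mult of_rat_power)
  have small: "x0^2 < 4 * \<bar>a\<bar> / 3"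
  proof (rule ccontr)
    assume "\<not> ?thesis"
    then have big: "x0^2 \<ge> 4 * \<bar>a\<bar> / 3" by simp
    have fge: "f t \<ge> 0" if "t \<ge> x0" for t
      using cubic_mono[OF big that, of b] oc unfolding f_def
      by (smt (verit) zero_le_power2)
    define s where "s = (if y0 \<ge> 0 then 1 else -1 :: real)"
    define g where "g = (\<lambda>t. (t, s * sqrt (f t)))"
    define S where "S = g ` {x0..}"
    have cg: "continuous_on {x0..} g" unfolding g_def f_def
      by (intro continuous_intros)
    have conn: "connected S" unfolding S_def
      by (rule connected_continuous_image[OF cg]) simp
    have gx0: "g x0 = (x0, y0)" unfolding g_def s_def using oc[symmetric]
      by (auto simp: real_sqrt_abs)
    have inS: "(x0, y0) \<in> S" unfolding S_def using gx0[symmetric] by auto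
    have sub: "S \<subseteq> ec_real_points A B"
    proof
      fix p assume "p \<in> S"
      then obtain t where t: "t \<ge> x0" "p = g t" unfolding S_def by auto
      have "s^2 = 1" unfolding s_def by simp
      then have "(s * sqrt (f t))^2 = f t" using fge[OF t(1)]
        by (simp add: power_mult_distrib)
      then show "p \<in> ec_real_points A B"
        unfolding ec_real_points_def t(2) g_def f_def a_def b_def by simp
    qed
    have "S \<subseteq> connected_component_set (ec_real_points A B) (of_rat x, of_rat y)"
      using connected_component_maximal[OF inS conn sub] unfolding x0_def y0_def .
    then have "bounded S" using bounded_comp bounded_subset by blast
    then obtain K where K: "\<And>p. p \<in> S \<Longrightarrow> norm p \<le> K" unfolding bounded_iff by auto
    define t where "t = max x0 (K + 1)"
    have "g t \<in> S" unfolding S_def t_def by auto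
    then have "norm (g t) \<le> K" by (rule K)
    moreover have "norm t \<le> norm (g t)" unfolding g_def by (rule norm_fst_le)
    ultimately show False unfolding t_def by auto
  qed
  define j where "j = ec_j A B"
  define D where "D = ec_disc A B"
  define M where "M = max (exp (rat_height j)) (exp (rat_height D))"
  have hj: "rat_height j \<ge> 0" "\<bar>real_of_rat j\<bar> \<le> exp (rat_height j)"
    using rat_height_facts by auto
  have hD: "rat_height D \<ge> 0" "\<bar>real_of_rat D\<bar> \<le> exp (rat_height D)"
    using rat_height_facts by auto
  have M1: "M \<ge> 1" unfolding M_def using hj(1) by (simp add: le_max_iff_disj)
  have jD: "real_of_rat j * real_of_rat D = -110592 * a^3"
  proof -
    have "j * D = -110592 * A^3" unfolding j_def D_def ec_j_def
      using elliptic by (simp add: power_mult_distrib)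
    then have "real_of_rat (j * D) = real_of_rat (-110592 * A^3)" by simp
    then show ?thesis unfolding a_def by (simp add: of_rat_minus of_rat_mult of_rat_power)
  qed
  have A3: "110592 * \<bar>a\<bar>^3 \<le> M^2"
  proof -
    have "110592 * \<bar>a\<bar>^3 = \<bar>real_of_rat j\<bar> * \<bar>real_of_rat D\<bar>"
      proof -
      have "\<bar>real_of_rat j * real_of_rat D\<bar> = \<bar>- (110592 * a ^ 3)\<bar>" using jD by simp
      then show ?thesis by (simp add: abs_mult power_abs)
    qed
    also have "\<dots> \<le> M * M"
      by (intro mult_mono) (use hj hD in \<open>auto simp: M_def le_max_iff_disj\<close>)
    finally show ?thesis by (simp add: power2_eq_square)
  qed
  have x6: "\<bar>x0\<bar>^6 \<le> M^2"
  proof -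
    have "\<bar>x0\<bar>^6 = (x0^2)^3" by (simp add: power_mult[symmetric])
    also have "\<dots> \<le> (4 * \<bar>a\<bar> / 3)^3" using small by (intro power_mono) auto
    also have "\<dots> = 64/27 * \<bar>a\<bar>^3" by (simp add: power_divide power_mult_distrib)
    also have "\<dots> \<le> M^2" using A3 zero_le_power[of "\<bar>a\<bar>" 3] by linarith
    finally show ?thesis .
  qed
  have x3: "\<bar>x0\<bar>^3 \<le> M"
  proof -
    have "(\<bar>x0\<bar>^3)^2 \<le> M^2" using x6 by (simp add: power_mult[symmetric])
    then show ?thesis using M1 by (smt (verit) power2_le_imp_le)
  qed
  have lnM: "ln M = max (rat_height j) (rat_height D)"
    unfolding M_def by (simp add: max_def)
  show ?thesis
  proof (cases "x0 = 0")
    case True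
    then show ?thesis using hj hD unfolding ec_height_def x0_def j_def D_def by simp
  next
    case False
    have "3 * ln \<bar>x0\<bar> = ln (\<bar>x0\<bar>^3)" using False by (simp add: ln_realpow)
    also have "\<dots> \<le> ln M" using False x3 M1 by (subst ln_le_cancel_iff) auto
    finally have "3 * ln \<bar>x0\<bar> \<le> max (rat_height j) (rat_height D)" using lnM by simp
    then show ?thesis unfolding ec_height_def x0_def[symmetric] j_def D_def by linarith
  qed
qed

end
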